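(* Let $B_N'=\dfrac{\sum_{k=1}^{N}\frac{1}{\log(k+1)}}{\sum_{k=1}^{2N}\frac{1}{\log(k+1)}}$ for $N\in\mathbb N$. Then $B_{N+1}'<B_N'$ for all integers $N\ge 5$.
   Context: $\log$ denotes the logarithm to base $2$. *)

theory Defs
  imports Complex_Main
begin

definition Bprime :: "nat \<Rightarrow> real" where
  "Bprime N = (\<Sum>k=1..N. 1 / log 2 (real k + 1)) / (\<Sum>k=1..2*N. 1 / log 2 (real k + 1))"

end

theory Submission
  imports Defs "HOL-Analysis.Harmonic_Numbers"
begin


lemma inv_lo: "0 < l \<Longrightarrow> (x::real) \<le> h \<Longrightarrow> l \<le> x \<Longrightarrow> d * h \<le> 1 \<Longrightarrow> d \<le> 1 / x"
proof -
  assume a: "0 < l" "x \<le> h" "l \<le> x" "d * h \<le> 1"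
  then have "0 < x" by linarith
  show "d \<le> 1 / x"
  proof (cases "d \<le> 0")
    case True then show ?thesis using \<open>0 < x\<close> by (smt (verit) divide_pos_pos)
  next
    case False
    then have "d * x \<le> d * h" using a by (intro mult_left_mono) auto
    then show ?thesis using a \<open>0 < x\<close> by (simp add: le_divide_eq)
  qed
qed

lemma inv_hi: "0 < l \<Longrightarrow> l \<le> (x::real) \<Longrightarrow> 1 \<le> u * l \<Longrightarrow> 1 / x \<le> u"
proof -
  assume a: "0 < l" "l \<le> x" "1 \<le> u * l"
  then have "0 < x" by linarith
  have "0 < u"
  proof (rule ccontr)
    assume "\<not> 0 < u"
    then have "u * l \<le> 0" using a by (intro mult_nonpos_nonneg) auto
    then show False using a by linarith
  qed
  then have "u * l \<le> u * x" using a by (intro mult_left_mono) auto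
  then show ?thesis using a \<open>0 < x\<close> by (simp add: divide_le_eq)
qed

lemma ln_facts:
  "ln (3/2::real) = ln 3 - ln 2" "ln (4::real) = 2 * ln 2" "ln (5/4::real) = ln 5 - ln 4"
  "ln (6::real) = ln 2 + ln 3" "ln (8::real) = 3 * ln 2" "ln (8/7::real) = ln 8 - ln 7"
  "ln (9::real) = 2 * ln 3" "ln (10::real) = ln 2 + ln 5" "ln (11/10::real) = ln 11 - ln 10"
  "ln (12::real) = ln 4 + ln 3" "ln (13/12::real) = ln 13 - ln 12" "ln (14::real) = ln 2 + ln 7"
  "ln (15::real) = ln 3 + ln 5" "ln (16::real) = 4 * ln 2" "ln (17/16::real) = ln 17 - ln 16"
  using ln_mult[of "2::real" 2] ln_mult[of "2::real" 3] ln_mult[of "4::real" 2] ln_mult[of "3::real" 3]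
    ln_mult[of "2::real" 5] ln_mult[of "4::real" 3] ln_mult[of "2::real" 7] ln_mult[of "3::real" 5]
    ln_mult[of "8::real" 2]
    ln_div[of "3::real" 2] ln_div[of "5::real" 4] ln_div[of "8::real" 7] ln_div[of "11::real" 10]
    ln_div[of "13::real" 12] ln_div[of "17::real" 16]
  by simp_all

lemma lnB_2: "0.69314718055 \<le> ln (2::real) \<and> ln (2::real) \<le> 0.69314718056"
  using ln_approx_bounds[of "2::real" 12] by (simp add: eval_nat_numeral lessThan_Suc)

lemma lnB_3_2: "0.40546510810 \<le> ln (3/2::real) \<and> ln (3/2::real) \<le> 0.40546510811"
  using ln_approx_bounds[of "3/2::real" 8] by (simp add: eval_nat_numeral lessThan_Suc)

lemma lnB_5_4: "0.22314355131 \<le> ln (5/4::real) \<and> ln (5/4::real) \<le> 0.22314355132"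
  using ln_approx_bounds[of "5/4::real" 6] by (simp add: eval_nat_numeral lessThan_Suc)

lemma lnB_8_7: "0.13353139262 \<le> ln (8/7::real) \<and> ln (8/7::real) \<le> 0.13353139263"
  using ln_approx_bounds[of "8/7::real" 5] by (simp add: eval_nat_numeral lessThan_Suc)

lemma lnB_11_10: "0.09531017980 \<le> ln (11/10::real) \<and> ln (11/10::real) \<le> 0.09531017981"
  using ln_approx_bounds[of "11/10::real" 4] by (simp add: eval_nat_numeral lessThan_Suc)

lemma lnB_13_12: "0.08004270767 \<le> ln (13/12::real) \<and> ln (13/12::real) \<le> 0.08004270768"
  using ln_approx_bounds[of "13/12::real" 4] by (simp add: eval_nat_numeral lessThan_Suc)

lemma lnB_17_16: "0.06062462181 \<le> ln (17/16::real) \<and> ln (17/16::real) \<le> 0.06062462182"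
  using ln_approx_bounds[of "17/16::real" 4] by (simp add: eval_nat_numeral lessThan_Suc)

lemma lnb_2: "0.69314718055 \<le> ln (2::real) \<and> ln (2::real) \<le> 0.69314718056"
  using lnB_2 lnB_3_2 lnB_5_4 lnB_8_7 lnB_11_10 lnB_13_12 lnB_17_16 ln_facts by linarith

lemma invb_2: "1.44269504088 \<le> 1 / ln (2::real) \<and> 1 / ln (2::real) \<le> 1.44269504091"
  using lnb_2 by (intro conjI inv_lo[of "0.69314718055" _ "0.69314718056"] inv_hi[of "0.69314718055"]) simp_all

lemma lnb_3: "1.09861228865 \<le> ln (3::real) \<and> ln (3::real) \<le> 1.09861228867"
  using lnB_2 lnB_3_2 lnB_5_4 lnB_8_7 lnB_11_10 lnB_13_12 lnB_17_16 ln_facts by linarith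

lemma invb_3: "0.91023922662 \<le> 1 / ln (3::real) \<and> 1 / ln (3::real) \<le> 0.91023922665"
  using lnb_3 by (intro conjI inv_lo[of "1.09861228865" _ "1.09861228867"] inv_hi[of "1.09861228865"]) simp_all

lemma lnb_4: "1.38629436110 \<le> ln (4::real) \<and> ln (4::real) \<le> 1.38629436112"
  using lnB_2 lnB_3_2 lnB_5_4 lnB_8_7 lnB_11_10 lnB_13_12 lnB_17_16 ln_facts by linarith

lemma invb_4: "0.72134752044 \<le> 1 / ln (4::real) \<and> 1 / ln (4::real) \<le> 0.72134752046"
  using lnb_4 by (intro conjI inv_lo[of "1.38629436110" _ "1.38629436112"] inv_hi[of "1.38629436110"]) simp_all

lemma lnb_5: "1.60943791241 \<le> ln (5::real) \<and> ln (5::real) \<le> 1.60943791244"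
  using lnB_2 lnB_3_2 lnB_5_4 lnB_8_7 lnB_11_10 lnB_13_12 lnB_17_16 ln_facts by linarith

lemma invb_5: "0.62133493455 \<le> 1 / ln (5::real) \<and> 1 / ln (5::real) \<le> 0.62133493457"
  using lnb_5 by (intro conjI inv_lo[of "1.60943791241" _ "1.60943791244"] inv_hi[of "1.60943791241"]) simp_all

lemma lnb_6: "1.79175946920 \<le> ln (6::real) \<and> ln (6::real) \<le> 1.79175946923"
  using lnB_2 lnB_3_2 lnB_5_4 lnB_8_7 lnB_11_10 lnB_13_12 lnB_17_16 ln_facts by linarith

lemma invb_6: "0.55811062655 \<le> 1 / ln (6::real) \<and> 1 / ln (6::real) \<le> 0.55811062656"
  using lnb_6 by (intro conjI inv_lo[of "1.79175946920" _ "1.79175946923"] inv_hi[of "1.79175946920"]) simp_all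

lemma lnb_7: "1.94591014902 \<le> ln (7::real) \<and> ln (7::real) \<le> 1.94591014906"
  using lnB_2 lnB_3_2 lnB_5_4 lnB_8_7 lnB_11_10 lnB_13_12 lnB_17_16 ln_facts by linarith

lemma invb_7: "0.51389834236 \<le> 1 / ln (7::real) \<and> 1 / ln (7::real) \<le> 0.51389834238"
  using lnb_7 by (intro conjI inv_lo[of "1.94591014902" _ "1.94591014906"] inv_hi[of "1.94591014902"]) simp_all

lemma lnb_8: "2.07944154165 \<le> ln (8::real) \<and> ln (8::real) \<le> 2.07944154168"
  using lnB_2 lnB_3_2 lnB_5_4 lnB_8_7 lnB_11_10 lnB_13_12 lnB_17_16 ln_facts by linarith

lemma invb_8: "0.48089834696 \<le> 1 / ln (8::real) \<and> 1 / ln (8::real) \<le> 0.48089834697"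
  using lnb_8 by (intro conjI inv_lo[of "2.07944154165" _ "2.07944154168"] inv_hi[of "2.07944154165"]) simp_all

lemma lnb_9: "2.19722457730 \<le> ln (9::real) \<and> ln (9::real) \<le> 2.19722457734"
  using lnB_2 lnB_3_2 lnB_5_4 lnB_8_7 lnB_11_10 lnB_13_12 lnB_17_16 ln_facts by linarith

lemma invb_9: "0.45511961331 \<le> 1 / ln (9::real) \<and> 1 / ln (9::real) \<le> 0.45511961333"
  using lnb_9 by (intro conjI inv_lo[of "2.19722457730" _ "2.19722457734"] inv_hi[of "2.19722457730"]) simp_all

lemma lnb_10: "2.30258509296 \<le> ln (10::real) \<and> ln (10::real) \<le> 2.30258509300"
  using lnB_2 lnB_3_2 lnB_5_4 lnB_8_7 lnB_11_10 lnB_13_12 lnB_17_16 ln_facts by linarith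

lemma invb_10: "0.43429448190 \<le> 1 / ln (10::real) \<and> 1 / ln (10::real) \<le> 0.43429448191"
  using lnb_10 by (intro conjI inv_lo[of "2.30258509296" _ "2.30258509300"] inv_hi[of "2.30258509296"]) simp_all

lemma lnb_11: "2.39789527276 \<le> ln (11::real) \<and> ln (11::real) \<le> 2.39789527281"
  using lnB_2 lnB_3_2 lnB_5_4 lnB_8_7 lnB_11_10 lnB_13_12 lnB_17_16 ln_facts by linarith

lemma invb_11: "0.41703239142 \<le> 1 / ln (11::real) \<and> 1 / ln (11::real) \<le> 0.41703239144"
  using lnb_11 by (intro conjI inv_lo[of "2.39789527276" _ "2.39789527281"] inv_hi[of "2.39789527276"]) simp_all

lemma lnb_12: "2.48490664975 \<le> ln (12::real) \<and> ln (12::real) \<le> 2.48490664979"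
  using lnB_2 lnB_3_2 lnB_5_4 lnB_8_7 lnB_11_10 lnB_13_12 lnB_17_16 ln_facts by linarith

lemma invb_12: "0.40242960438 \<le> 1 / ln (12::real) \<and> 1 / ln (12::real) \<le> 0.40242960439"
  using lnb_12 by (intro conjI inv_lo[of "2.48490664975" _ "2.48490664979"] inv_hi[of "2.48490664975"]) simp_all

lemma lnb_13: "2.56494935742 \<le> ln (13::real) \<and> ln (13::real) \<le> 2.56494935747"
  using lnB_2 lnB_3_2 lnB_5_4 lnB_8_7 lnB_11_10 lnB_13_12 lnB_17_16 ln_facts by linarith

lemma invb_13: "0.38987124524 \<le> 1 / ln (13::real) \<and> 1 / ln (13::real) \<le> 0.38987124526"
  using lnb_13 by (intro conjI inv_lo[of "2.56494935742" _ "2.56494935747"] inv_hi[of "2.56494935742"]) simp_all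

lemma lnb_14: "2.63905732957 \<le> ln (14::real) \<and> ln (14::real) \<le> 2.63905732962"
  using lnB_2 lnB_3_2 lnB_5_4 lnB_8_7 lnB_11_10 lnB_13_12 lnB_17_16 ln_facts by linarith

lemma invb_14: "0.37892318168 \<le> 1 / ln (14::real) \<and> 1 / ln (14::real) \<le> 0.37892318170"
  using lnb_14 by (intro conjI inv_lo[of "2.63905732957" _ "2.63905732962"] inv_hi[of "2.63905732957"]) simp_all

lemma lnb_15: "2.70805020106 \<le> ln (15::real) \<and> ln (15::real) \<le> 2.70805020111"
  using lnB_2 lnB_3_2 lnB_5_4 lnB_8_7 lnB_11_10 lnB_13_12 lnB_17_16 ln_facts by linarith

lemma invb_15: "0.36926937306 \<le> 1 / ln (15::real) \<and> 1 / ln (15::real) \<le> 0.36926937308"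
  using lnb_15 by (intro conjI inv_lo[of "2.70805020106" _ "2.70805020111"] inv_hi[of "2.70805020106"]) simp_all

lemma lnb_16: "2.77258872220 \<le> ln (16::real) \<and> ln (16::real) \<le> 2.77258872224"
  using lnB_2 lnB_3_2 lnB_5_4 lnB_8_7 lnB_11_10 lnB_13_12 lnB_17_16 ln_facts by linarith

lemma invb_16: "0.36067376022 \<le> 1 / ln (16::real) \<and> 1 / ln (16::real) \<le> 0.36067376023"
  using lnb_16 by (intro conjI inv_lo[of "2.77258872220" _ "2.77258872224"] inv_hi[of "2.77258872220"]) simp_all

lemma lnb_17: "2.83321334401 \<le> ln (17::real) \<and> ln (17::real) \<le> 2.83321334406"
  using lnB_2 lnB_3_2 lnB_5_4 lnB_8_7 lnB_11_10 lnB_13_12 lnB_17_16 ln_facts by linarith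

lemma invb_17: "0.35295612386 \<le> 1 / ln (17::real) \<and> 1 / ln (17::real) \<le> 0.35295612388"
  using lnb_17 by (intro conjI inv_lo[of "2.83321334401" _ "2.83321334406"] inv_hi[of "2.83321334401"]) simp_all

lemma num_E5: "(1 / ln (7::real)) * (1 / ln (2::real) + 1 / ln (3::real) + 1 / ln (4::real) + 1 / ln (5::real) + 1 / ln (6::real) + 1 / ln (7::real) + 1 / ln (8::real) + 1 / ln (9::real) + 1 / ln (10::real) + 1 / ln (11::real)) < (1 / ln (2::real) + 1 / ln (3::real) + 1 / ln (4::real) + 1 / ln (5::real) + 1 / ln (6::real)) * (1 / ln (12::real) + 1 / ln (13::real))"
proof -
  have h1: "4.25372734904 \<le> (1 / ln (2::real) + 1 / ln (3::real) + 1 / ln (4::real) + 1 / ln (5::real) + 1 / ln (6::real))" using invb_2 invb_3 invb_4 invb_5 invb_6 invb_7 invb_8 invb_9 invb_10 invb_11 invb_12 invb_13 by linarith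
  have h2: "0.79230084962 \<le> (1 / ln (12::real) + 1 / ln (13::real))" using invb_2 invb_3 invb_4 invb_5 invb_6 invb_7 invb_8 invb_9 invb_10 invb_11 invb_12 invb_13 by linarith
  have h3: "(1 / ln (7::real)) \<le> 0.51389834238" using invb_2 invb_3 invb_4 invb_5 invb_6 invb_7 invb_8 invb_9 invb_10 invb_11 invb_12 invb_13 by linarith
  have h4: "(1 / ln (2::real) + 1 / ln (3::real) + 1 / ln (4::real) + 1 / ln (5::real) + 1 / ln (6::real) + 1 / ln (7::real) + 1 / ln (8::real) + 1 / ln (9::real) + 1 / ln (10::real) + 1 / ln (11::real)) \<le> 6.55497052518" using invb_2 invb_3 invb_4 invb_5 invb_6 invb_7 invb_8 invb_9 invb_10 invb_11 invb_12 invb_13 by linarith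
  have p1: "(1 / ln (7::real)) * (1 / ln (2::real) + 1 / ln (3::real) + 1 / ln (4::real) + 1 / ln (5::real) + 1 / ln (6::real) + 1 / ln (7::real) + 1 / ln (8::real) + 1 / ln (9::real) + 1 / ln (10::real) + 1 / ln (11::real)) \<le> 0.51389834238 * 6.55497052518"
    by (rule mult_mono[OF h3 h4]) (use invb_2 invb_3 invb_4 invb_5 invb_6 invb_7 invb_8 invb_9 invb_10 invb_11 invb_12 invb_13 in linarith)+
  have p2: "4.25372734904 * 0.79230084962 \<le> (1 / ln (2::real) + 1 / ln (3::real) + 1 / ln (4::real) + 1 / ln (5::real) + 1 / ln (6::real)) * (1 / ln (12::real) + 1 / ln (13::real))"
    by (rule mult_mono[OF h1 h2]) (use invb_2 invb_3 invb_4 invb_5 invb_6 invb_7 invb_8 invb_9 invb_10 invb_11 invb_12 invb_13 in linarith)+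
  have p3: "(0.51389834238::real) * 6.55497052518 < 4.25372734904 * 0.79230084962" by simp
  show ?thesis using p1 p2 p3 by linarith
qed

lemma num_c6: "(1 / ln (8::real)) * (1 / ln (12::real) + 1 / ln (13::real)) < (1 / ln (7::real)) * (1 / ln (14::real) + 1 / ln (15::real))"
proof -
  have h1: "0.51389834236 \<le> (1 / ln (7::real))" using invb_7 invb_8 invb_12 invb_13 invb_14 invb_15 by linarith
  have h2: "0.74819255474 \<le> (1 / ln (14::real) + 1 / ln (15::real))" using invb_7 invb_8 invb_12 invb_13 invb_14 invb_15 by linarith
  have h3: "(1 / ln (8::real)) \<le> 0.48089834697" using invb_7 invb_8 invb_12 invb_13 invb_14 invb_15 by linarith
  have h4: "(1 / ln (12::real) + 1 / ln (13::real)) \<le> 0.79230084965" using invb_7 invb_8 invb_12 invb_13 invb_14 invb_15 by linarith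
  have p1: "(1 / ln (8::real)) * (1 / ln (12::real) + 1 / ln (13::real)) \<le> 0.48089834697 * 0.79230084965"
    by (rule mult_mono[OF h3 h4]) (use invb_7 invb_8 invb_12 invb_13 invb_14 invb_15 in linarith)+
  have p2: "0.51389834236 * 0.74819255474 \<le> (1 / ln (7::real)) * (1 / ln (14::real) + 1 / ln (15::real))"
    by (rule mult_mono[OF h1 h2]) (use invb_7 invb_8 invb_12 invb_13 invb_14 invb_15 in linarith)+
  have p3: "(0.48089834697::real) * 0.79230084965 < 0.51389834236 * 0.74819255474" by simp
  show ?thesis using p1 p2 p3 by linarith
qed

lemma num_c7: "(1 / ln (9::real)) * (1 / ln (14::real) + 1 / ln (15::real)) < (1 / ln (8::real)) * (1 / ln (16::real) + 1 / ln (17::real))"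
proof -
  have h1: "0.48089834696 \<le> (1 / ln (8::real))" using invb_8 invb_9 invb_14 invb_15 invb_16 invb_17 by linarith
  have h2: "0.71362988408 \<le> (1 / ln (16::real) + 1 / ln (17::real))" using invb_8 invb_9 invb_14 invb_15 invb_16 invb_17 by linarith
  have h3: "(1 / ln (9::real)) \<le> 0.45511961333" using invb_8 invb_9 invb_14 invb_15 invb_16 invb_17 by linarith
  have h4: "(1 / ln (14::real) + 1 / ln (15::real)) \<le> 0.74819255478" using invb_8 invb_9 invb_14 invb_15 invb_16 invb_17 by linarith
  have p1: "(1 / ln (9::real)) * (1 / ln (14::real) + 1 / ln (15::real)) \<le> 0.45511961333 * 0.74819255478"
    by (rule mult_mono[OF h3 h4]) (use invb_8 invb_9 invb_14 invb_15 invb_16 invb_17 in linarith)+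
  have p2: "0.48089834696 * 0.71362988408 \<le> (1 / ln (8::real)) * (1 / ln (16::real) + 1 / ln (17::real))"
    by (rule mult_mono[OF h1 h2]) (use invb_8 invb_9 invb_14 invb_15 invb_16 invb_17 in linarith)+
  have p3: "(0.45511961333::real) * 0.74819255478 < 0.48089834696 * 0.71362988408" by simp
  show ?thesis using p1 p2 p3 by linarith
qed



definition la :: "nat \<Rightarrow> real" where "la k = 1 / ln (real k + 1)"
definition SA :: "nat \<Rightarrow> real" where "SA n = (\<Sum>k=1..n. la k)"
definition bb :: "nat \<Rightarrow> real" where "bb j = la (2*j-1) + la (2*j)"
definition cc :: "nat \<Rightarrow> real" where "cc j = la j / bb j"
definition EE :: "nat \<Rightarrow> real" where "EE n = SA n - cc (n+1) * SA (2*n)"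

lemma la_pos: "k \<ge> 1 \<Longrightarrow> la k > 0"
  unfolding la_def by simp

lemma SA_Suc: "SA (Suc n) = SA n + la (Suc n)"
  unfolding SA_def by simp

lemma SA_pos: "n \<ge> 1 \<Longrightarrow> SA n > 0"
proof (induction n rule: nat_induct_at_least)
  case base then show ?case by (simp add: SA_def la_pos)
next
  case (Suc n) then show ?case using la_pos[of "Suc n"] by (simp add: SA_Suc)
qed

lemma bb_pos: "j \<ge> 1 \<Longrightarrow> bb j > 0"
proof -
  assume "j \<ge> 1"
  then have "2*j-1 \<ge> 1" "2*j \<ge> 1" by simp_all
  then show ?thesis unfolding bb_def using la_pos[of "2*j-1"] la_pos[of "2*j"] by simp
qed

lemma bb_eq: "j \<ge> 1 \<Longrightarrow> bb j = 1 / ln (2 * real j) + 1 / ln (2 * real j + 1)"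
  unfolding bb_def la_def by (simp add: of_nat_diff)

lemma SA2: "SA (2 * Suc n) = SA (2*n) + bb (Suc n)"
proof -
  have "2 * Suc n = Suc (Suc (2*n))" by simp
  then have "SA (2 * Suc n) = SA (2*n) + la (Suc (2*n)) + la (Suc (Suc (2*n)))"
    by (simp add: SA_Suc)
  moreover have "bb (Suc n) = la (Suc (2*n)) + la (Suc (Suc (2*n)))"
    unfolding bb_def by simp
  ultimately show ?thesis by simp
qed

lemma la_cc: "j \<ge> 1 \<Longrightarrow> la j = cc j * bb j"
  unfolding cc_def using bb_pos[of j] by simp

lemma EE_step: "EE (Suc n) = EE n + (cc (n+1) - cc (n+2)) * SA (2 * Suc n)"
proof -
  have "la (Suc n) = cc (Suc n) * bb (Suc n)" by (rule la_cc) simp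
  then show ?thesis
    unfolding EE_def using SA2[of n] SA_Suc[of n] by (simp add: algebra_simps)
qed

lemma frac_lt: "0 < (b::real) \<Longrightarrow> 0 < d \<Longrightarrow> a * d < c * b \<Longrightarrow> a / b < c / d"
  by (simp add: field_simps)

lemma ln_diff_le: "0 < (b::real) \<Longrightarrow> 0 < a \<Longrightarrow> ln a - ln b \<le> (a - b) / b"
proof -
  assume "0 < b" "0 < a"
  then have "ln (a / b) \<le> a / b - 1" by (intro ln_le_minus_one) simp
  moreover have "ln (a/b) = ln a - ln b" using \<open>0<b\<close> \<open>0<a\<close> by (simp add: ln_div)
  moreover have "a / b - 1 = (a - b) / b" using \<open>0<b\<close> by (simp add: field_simps)
  ultimately show ?thesis by simp
qed

lemma pow_bound: "n \<ge> 8 \<Longrightarrow> 3 * (n+1)^2 < (2::nat)^n"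
proof (induction n rule: nat_induct_at_least)
  case base then show ?case by simp
next
  case (Suc n)
  have "n * n \<ge> 8 * 8" using Suc.hyps mult_le_mono by blast
  then have "3 * (Suc n + 1)^2 \<le> 2 * (3 * (n+1)^2)" by (simp add: power2_eq_square)
  also have "\<dots> < 2 * 2^n" using Suc.IH by simp
  finally show ?case by simp
qed

lemma key_ineq:
  assumes "m \<ge> (8::nat)"
  shows "1 + 2 * ln (real m + 1) < real m * ln 2"
proof -
  have "real (3 * (m+1)^2) < real ((2::nat)^m)" using pow_bound[OF assms] by linarith
  then have "3 * (real m + 1)^2 < 2 ^ m" by (simp add: add.commute)
  then have "ln (3 * (real m + 1)^2) < ln (2 ^ m)" by (intro ln_less_cancel_iff[THEN iffD2]) auto
  moreover have "ln (3 * (real m + 1)^2) = ln 3 + 2 * ln (real m + 1)"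
    by (simp add: ln_mult ln_realpow)
  moreover have "ln ((2::real) ^ m) = real m * ln 2" by (simp add: ln_realpow)
  moreover have "ln (3::real) > 1" using lnb_3 by simp
  ultimately show ?thesis by linarith
qed

lemma G:
  fixes u p q r m L :: real
  assumes "u > 0" "m > 0" "q > 0" "p - u \<ge> 1 / (m+2)" "r - q \<le> 1 / m"
    "q \<ge> L + u - 1/m" "1 + 2*u < m * L"
  shows "u * r < p * q"
proof -
  have "u * r \<le> u * (q + 1/m)" using assms by (intro mult_left_mono) auto
  also have "\<dots> = u * q + u / m" by (simp add: algebra_simps)
  also have "u / m < q / (m+2)"
  proof -
    have "q * m \<ge> (L + u - 1/m) * m" using assms(6) assms(2) by (intro mult_right_mono) auto
    also have "(L + u - 1/m) * m = L * m + u * m - 1" using assms(2) by (simp add: field_simps)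
    finally have "q * m \<ge> L * m + u * m - 1" .
    then have "u * (m+2) < q * m" using assms(7) by (simp add: algebra_simps)
    then show ?thesis using assms by (simp add: field_simps)
  qed
  also have "u * q + q / (m+2) = (u + 1/(m+2)) * q" by (simp add: algebra_simps)
  also have "\<dots> \<le> p * q" using assms by (intro mult_right_mono) auto
  finally show ?thesis by simp
qed


lemma pair_ineqs:
  assumes "m \<ge> (8::nat)"
  shows "ln (real m + 1) * ln (2 * real m + 2) < ln (real m + 2) * ln (2 * real m)"
    and "ln (real m + 1) * ln (2 * real m + 3) < ln (real m + 2) * ln (2 * real m + 1)"
proof -
  let ?u = "ln (real m + 1)" and ?p = "ln (real m + 2)"
  have m0: "real m > 0" using assms by simp
  have m8: "real m \<ge> 8" using assms by simp
  have u0: "?u > 0" using m0 by simp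
  have key: "1 + 2 * ?u < real m * ln 2" by (rule key_ineq[OF assms])
  have pu: "?p - ?u \<ge> 1 / (real m + 2)"
  proof -
    have "ln (real m + 1) - ln (real m + 2) \<le> ((real m + 1) - (real m + 2)) / (real m + 2)"
      by (rule ln_diff_le) (use m0 in auto)
    then show ?thesis by (simp add: diff_divide_distrib)
  qed
  have um: "?u - ln (real m) \<le> 1 / real m"
  proof -
    have "ln (real m + 1) - ln (real m) \<le> ((real m + 1) - real m) / real m"
      by (rule ln_diff_le) (use m0 in auto)
    then show ?thesis by simp
  qed
  have l2m: "ln (2 * real m) = ln 2 + ln (real m)" using m0 by (simp add: ln_mult)
  have l2m2: "ln (2 * real m + 2) = ln 2 + ?u"
  proof -
    have e: "2 * real m + 2 = 2 * (real m + 1)" by simp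
    have "ln (2 * (real m + 1)) = ln 2 + ln (real m + 1)" by (rule ln_mult_pos) auto
    then show ?thesis unfolding e .
  qed
  have q0: "ln (2 * real m) > 0" using m0 m8 by simp
  show "?u * ln (2 * real m + 2) < ?p * ln (2 * real m)"
    by (rule G[where L="ln 2" and m="real m"]) (use u0 m0 q0 pu um l2m l2m2 key in auto)
  have a1: "ln (2 * real m + 1) \<ge> ln (2 * real m)" using m0 by simp
  have a2: "ln (2 * real m + 3) - ln (2 * real m + 1) \<le> ((2 * real m + 3) - (2 * real m + 1)) / (2 * real m + 1)"
    by (rule ln_diff_le) (use m0 in auto)
  have a3: "((2 * real m + 3) - (2 * real m + 1)) / (2 * real m + 1) \<le> 1 / real m"
    using m0 by (simp add: field_simps)
  show "?u * ln (2 * real m + 3) < ?p * ln (2 * real m + 1)"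
    by (rule G[where L="ln 2" and m="real m"]) (use u0 m0 q0 a1 a2 a3 pu um l2m l2m2 key in auto)
qed

lemma recip_ineq:
  fixes P Q R1 R2 T1 T2 :: real
  assumes "P > 0" "Q > 0" "R1 > 0" "R2 > 0" "T1 > 0" "T2 > 0"
    "P * T1 < Q * R1" "P * T2 < Q * R2"
  shows "1 / Q * (1 / R1 + 1 / R2) < 1 / P * (1 / T1 + 1 / T2)"
proof -
  have "1 / (Q * R1) < 1 / (P * T1)"
    using assms by (intro divide_strict_left_mono) auto
  moreover have "1 / (Q * R2) < 1 / (P * T2)"
    using assms by (intro divide_strict_left_mono) auto
  ultimately show ?thesis by (simp add: distrib_left)
qed

lemma cc_dec:
  assumes "m \<ge> (6::nat)"
  shows "cc (m+1) < cc m"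
proof -
  have bm: "bb m = 1 / ln (2 * real m) + 1 / ln (2 * real m + 1)" using assms by (simp add: bb_eq)
  have bm1: "bb (m+1) = 1 / ln (2 * real m + 2) + 1 / ln (2 * real m + 3)"
    using bb_eq[of "m+1"] by (simp add: algebra_simps)
  have lm: "la m = 1 / ln (real m + 1)" by (simp add: la_def)
  have lm1: "la (m+1) = 1 / ln (real m + 2)" by (simp add: la_def add.assoc)
  have main: "la (m+1) * bb m < la m * bb (m+1)"
  proof (cases "m \<ge> 8")
    case True
    have m0: "real m > 0" using assms by simp
    show ?thesis unfolding bm bm1 lm lm1
      by (rule recip_ineq) (use m0 pair_ineqs[OF True] in auto)
  next
    case False
    then have "m = 6 \<or> m = 7" using assms by auto
    then show ?thesis
    proof
      assume "m = 6"
      then show ?thesis unfolding bm bm1 lm lm1 using num_c6 by simp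
    next
      assume "m = 7"
      then show ?thesis unfolding bm bm1 lm lm1 using num_c7 by simp
    qed
  qed
  show ?thesis unfolding cc_def
    by (rule frac_lt) (use bb_pos[of m] bb_pos[of "m+1"] assms main in auto)
qed

lemma EE5: "EE 5 > 0"
proof -
  have s5: "SA 5 = 1 / ln 2 + 1 / ln 3 + 1 / ln 4 + 1 / ln 5 + 1 / ln 6"
    by (simp add: SA_def la_def numeral_eq_Suc)
  have s10: "SA 10 = 1 / ln 2 + 1 / ln 3 + 1 / ln 4 + 1 / ln 5 + 1 / ln 6 + 1 / ln 7 + 1 / ln 8
     + 1 / ln 9 + 1 / ln 10 + 1 / ln 11"
    by (simp add: SA_def la_def numeral_eq_Suc)
  have b6: "bb 6 = 1 / ln 12 + 1 / ln 13" by (simp add: bb_eq)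
  have l6: "la 6 = 1 / ln 7" by (simp add: la_def)
  have bp: "bb 6 > 0" by (rule bb_pos) simp
  have "la 6 * SA 10 < SA 5 * bb 6" unfolding s5 s10 b6 l6 using num_E5 by simp
  then have "la 6 / bb 6 * SA 10 < SA 5" using bp by (simp add: field_simps)
  then show ?thesis unfolding EE_def cc_def by simp
qed

lemma EE_pos: "n \<ge> 5 \<Longrightarrow> EE n > 0"
proof (induction n rule: nat_induct_at_least)
  case base then show ?case by (rule EE5)
next
  case (Suc n)
  have "cc (n+2) < cc (n+1)" using cc_dec[of "n+1"] Suc.hyps by simp
  moreover have "SA (2 * Suc n) > 0" by (rule SA_pos) simp
  ultimately have "(cc (n+1) - cc (n+2)) * SA (2 * Suc n) > 0" by simp
  then show ?case using EE_step[of n] Suc.IH by simp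
qed

lemma Bprime_SA: "Bprime N = SA N / SA (2*N)"
proof -
  have t: "1 / log 2 (real k + 1) = ln 2 * la k" for k
    by (simp add: log_def la_def)
  have "Bprime N = (ln 2 * SA N) / (ln 2 * SA (2*N))"
    unfolding Bprime_def SA_def t by (simp add: sum_distrib_left)
  then show ?thesis by simp
qed

theorem proposition3:
  fixes N :: nat
  assumes "N \<ge> 5"
  shows "Bprime (N + 1) < Bprime N"
proof -
  have E: "EE N > 0" by (rule EE_pos[OF assms])
  have p1: "SA N > 0" "SA (2*N) > 0" "SA (2 * Suc N) > 0" using assms by (auto intro!: SA_pos)
  have bp: "bb (Suc N) > 0" by (rule bb_pos) simp
  have lc: "la (Suc N) = cc (Suc N) * bb (Suc N)" by (rule la_cc) simp
  have "SA (Suc N) * SA (2 * Suc N) - SA N * SA (2 * Suc N) = la (Suc N) * SA (2 * Suc N)"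
    by (simp add: SA_Suc algebra_simps)
  have D: "SA N * SA (2 * Suc N) - SA (Suc N) * SA (2*N) = bb (Suc N) * EE N"
    unfolding EE_def using SA2[of N] SA_Suc[of N] lc by (simp add: algebra_simps)
  have "SA (Suc N) * SA (2*N) < SA N * SA (2 * Suc N)"
    using D E bp by (smt (verit) mult_pos_pos)
  then have "SA (Suc N) / SA (2 * Suc N) < SA N / SA (2*N)"
    by (intro frac_lt) (use p1 in auto)
  then show ?thesis unfolding Bprime_SA by simp
qed

end
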